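(* Let $\gamma,A\in\mathcal{M}_k\otimes\mathcal{M}_m$ be states with $\mathrm{Im}(\gamma)=\mathrm{Im}(A)$. Suppose there is an orthogonal projection $V_1\in\mathcal{M}_k$ such that (1) $F_\gamma\circ G_\gamma(V_1\mathcal{M}_kV_1)\subseteq V_1\mathcal{M}_kV_1$, (2) $F_\gamma\circ G_\gamma|_{V_1\mathcal{M}_kV_1}$ is irreducible, and (3) $F_\gamma\circ G_\gamma|_{V_1^\perp\mathcal{M}_k+\mathcal{M}_kV_1^\perp}\equiv0$. Then the same three conditions hold with $F_A\circ G_A$ in place of $F_\gamma\circ G_\gamma$. In particular, $\gamma$ and $A$ both belong to $CR_{k,m}$.
   Context: $\mathcal{M}_k$ denotes the complex $k\times k$ matrices, and $\mathcal{M}_k\otimes\mathcal{M}_m$ is identified with $\mathcal{M}_{km}$ via the Kronecker product. A state is a positive semidefinite Hermitian matrix (not necessarily of trace one). For an orthogonal projection $W$, $W^\perp=\mathrm{Id}-W$; $V\mathcal{M}_kW=\{VXW:X\in\mathcal{M}_k\}$, $W\mathcal{M}_k=\{WX\}$, $\mathcal{M}_kW=\{XW\}$. For $\gamma=\sum_{i=1}^nA_i\otimes B_i\in\mathcal{M}_k\otimes\mathcal{M}_m$ define $G_\gamma:\mathcal{M}_k\to\mathcal{M}_m$, $G_\gamma(X)=\sum_i\mathrm{tr}(A_iX)B_i$, and $F_\gamma:\mathcal{M}_m\to\mathcal{M}_k$, $F_\gamma(Y)=\sum_i\mathrm{tr}(B_iY)A_i$. A linear map is positive if it maps positive semidefinite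 matrices to positive semidefinite matrices, and self-adjoint if self-adjoint with respect to $\langle X,Y\rangle=\mathrm{tr}(XY^* )$. Given an orthogonal projection $V\in\mathcal{M}_k$ and a positive map $T:V\mathcal{M}_kV\to V\mathcal{M}_kV$, $T$ is irreducible if the only orthogonal projections $W$ with $W\mathcal{M}_kW\subseteq V\mathcal{M}_kV$ and $T(W\mathcal{M}_kW)\subseteq W\mathcal{M}_kW$ are $W=0$ and $W=V$. A self-adjoint positive map $T:\mathcal{M}_k\to\mathcal{M}_k$ is completely reducible if there are orthogonal projections $W_1,\dots,W_l$ with $W_iW_j=0$ for $i\ne j$, $T(W_i\mathcal{M}_kW_i)\subseteq W_i\mathcal{M}_kW_i$ and $T|_{W_i\mathcal{M}_kW_i}$ irreducible for every $i$, and $T|_R\equiv0$, where $R$ is the orthogonal complement (trace inner product) of $\bigoplus_iW_i\mathcal{M}_kW_i$ in $\mathcal{M}_k$. $CR_{k,m}$ is the set of states $\gamma\in\mathcal{M}_k\otimes\mathcal{M}_m$ such that $F_\gamma\circ G_\gamma:\mathcal{M}_k\to\mathcal{M}_k$ is completely reducible. *)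

theory Defs
  imports "HOL-Analysis.Analysis"
begin

text \<open>Square complex matrices of size k are complex^'k^'k (entry A$i$j, row i, column j).
  The tensor product M_k (x) M_m is identified with M_km via the Kronecker product, i.e.
  with matrices indexed by pairs: (A (x) B)$(a,j)$(a',j') = A$a$a' * B$j$j'.\<close>

type_synonym 'n cmat = "complex^'n^'n"

definition kron :: "('k::finite) cmat \<Rightarrow> ('m::finite) cmat \<Rightarrow> ('k \<times> 'm) cmat" where
  "kron A B = (\<chi> p q. A $ fst p $ fst q * B $ snd p $ snd q)"

definition mtrace :: "('n::finite) cmat \<Rightarrow> complex" where
  "mtrace X = (\<Sum>i\<in>UNIV. X $ i $ i)"

definition cadj :: "('n::finite) cmat \<Rightarrow> 'n cmat" where
  "cadj X = (\<chi> i j. cnj (X $ j $ i))"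

definition tinner :: "('n::finite) cmat \<Rightarrow> 'n cmat \<Rightarrow> complex" where
  "tinner X Y = mtrace (X ** cadj Y)"

definition hermitian :: "('n::finite) cmat \<Rightarrow> bool" where
  "hermitian X \<longleftrightarrow> cadj X = X"

definition psd :: "('n::finite) cmat \<Rightarrow> bool" where
  "psd X \<longleftrightarrow> hermitian X \<and>
     (\<forall>v::complex^'n. 0 \<le> Re (\<Sum>i\<in>UNIV. cnj (v $ i) * (X *v v) $ i))"

definition is_state :: "('n::finite) cmat \<Rightarrow> bool" where
  "is_state X \<longleftrightarrow> psd X"

definition orth_proj :: "('n::finite) cmat \<Rightarrow> bool" where
  "orth_proj W \<longleftrightarrow> W ** W = W \<and> cadj W = W"

definition perp :: "('n::finite) cmat \<Rightarrow> 'n cmat" where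
  "perp W = mat 1 - W"

definition img :: "('n::finite) cmat \<Rightarrow> (complex^'n) set" where
  "img X = range (\<lambda>v. X *v v)"

definition sandw :: "('n::finite) cmat \<Rightarrow> 'n cmat \<Rightarrow> 'n cmat set" where
  "sandw V W = {V ** X ** W | X. True}"

definition lmul_sp :: "('n::finite) cmat \<Rightarrow> 'n cmat set" where
  "lmul_sp W = {W ** X | X. True}"

definition rmul_sp :: "('n::finite) cmat \<Rightarrow> 'n cmat set" where
  "rmul_sp W = {X ** W | X. True}"

text \<open>For gamma = sum_i A_i (x) B_i (Kronecker identification),
  G_gamma(X) = sum_i tr(A_i X) B_i and F_gamma(Y) = sum_i tr(B_i Y) A_i. These are linear in
  gamma, hence independent of the decomposition; written out entrywise they are:\<close>
definition Gmap :: "('k::finite \<times> 'm::finite) cmat \<Rightarrow> 'k cmat \<Rightarrow> 'm cmat" where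
  "Gmap \<gamma> X = (\<chi> j j'. \<Sum>a\<in>UNIV. \<Sum>a'\<in>UNIV. \<gamma> $ (a, j) $ (a', j') * X $ a' $ a)"

definition Fmap :: "('k::finite \<times> 'm::finite) cmat \<Rightarrow> 'm cmat \<Rightarrow> 'k cmat" where
  "Fmap \<gamma> Y = (\<chi> a a'. \<Sum>j\<in>UNIV. \<Sum>j'\<in>UNIV. \<gamma> $ (a, j) $ (a', j') * Y $ j' $ j)"

definition FG :: "('k::finite \<times> 'm::finite) cmat \<Rightarrow> 'k cmat \<Rightarrow> 'k cmat" where
  "FG \<gamma> = Fmap \<gamma> \<circ> Gmap \<gamma>"

definition positive_map :: "(('n::finite) cmat \<Rightarrow> 'n cmat) \<Rightarrow> bool" where
  "positive_map T \<longleftrightarrow> (\<forall>X. psd X \<longrightarrow> psd (T X))"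

definition self_adjoint_map :: "(('n::finite) cmat \<Rightarrow> 'n cmat) \<Rightarrow> bool" where
  "self_adjoint_map T \<longleftrightarrow> (\<forall>X Y. tinner (T X) Y = tinner X (T Y))"

text \<open>Irreducibility of T restricted to V M_k V (T is assumed to leave V M_k V invariant,
  which is stated separately wherever it is used).\<close>
definition irreducible_on :: "(('n::finite) cmat \<Rightarrow> 'n cmat) \<Rightarrow> 'n cmat \<Rightarrow> bool" where
  "irreducible_on T V \<longleftrightarrow>
     (\<forall>W. orth_proj W \<and> sandw W W \<subseteq> sandw V V \<and> T ` sandw W W \<subseteq> sandw W W
        \<longrightarrow> W = 0 \<or> W = V)"

definition completely_reducible :: "(('n::finite) cmat \<Rightarrow> 'n cmat) \<Rightarrow> bool" where
  "completely_reducible T \<longleftrightarrow> self_adjoint_map T \<and> positive_map T \<and>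
     (\<exists>Ws :: 'n cmat list.
        (\<forall>i<length Ws. orth_proj (Ws ! i)) \<and>
        (\<forall>i<length Ws. \<forall>j<length Ws. i \<noteq> j \<longrightarrow> Ws ! i ** Ws ! j = 0) \<and>
        (\<forall>i<length Ws. T ` sandw (Ws ! i) (Ws ! i) \<subseteq> sandw (Ws ! i) (Ws ! i)
                        \<and> irreducible_on T (Ws ! i)) \<and>
        (\<forall>X. (\<forall>i<length Ws. \<forall>Y\<in>sandw (Ws ! i) (Ws ! i). tinner X Y = 0) \<longrightarrow> T X = 0))"

definition CR :: "('k::finite \<times> 'm::finite) cmat set" where
  "CR = {\<gamma>. is_state \<gamma> \<and> completely_reducible (FG \<gamma>)}"

end

theory Submission
  imports Defs
begin

definition sip :: "complex^'n::finite \<Rightarrow> complex^'n \<Rightarrow> complex" where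
  "sip x y = (\<Sum>i\<in>UNIV. cnj (x$i) * y$i)"

lemma sip_diff_left: "sip (x - y) z = sip x z - sip y z"
  by (simp add: sip_def sum_subtractf algebra_simps)
lemma sip_diff_right: "sip x (y - z) = sip x y - sip x z"
  by (simp add: sip_def sum_subtractf algebra_simps)
lemma sip_add_left: "sip (x + y) z = sip x z + sip y z"
  by (simp add: sip_def sum.distrib algebra_simps)
lemma sip_add_right: "sip x (y + z) = sip x y + sip x z"
  by (simp add: sip_def sum.distrib algebra_simps)
lemma sip_smult_left: "sip (c *s x) y = cnj c * sip x y"
  by (simp add: sip_def sum_distrib_left algebra_simps)
lemma sip_smult_right: "sip x (c *s y) = c * sip x y"
  by (simp add: sip_def sum_distrib_left algebra_simps)
lemma sip_axis_left: "sip (axis s 1) y = y$s"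
proof -
  have "\<And>i. cnj ((axis s 1)$i) * y$i = (if i = s then y$s else 0)" by (simp add: axis_def)
  then show ?thesis by (simp add: sip_def)
qed
lemma sip_cnj: "cnj (sip x y) = sip y x"
  unfolding sip_def by (simp add: mult.commute)
lemma sip_zero_right[simp]: "sip x 0 = 0" by (simp add: sip_def)
lemma sip_zero_left[simp]: "sip 0 x = 0" by (simp add: sip_def)

lemma herm_entry: "hermitian P \<Longrightarrow> cnj (P$j$i) = P$i$j"
proof -
  assume "hermitian P"
  then have "cadj P $ i $ j = P $ i $ j" by (simp add: hermitian_def)
  then show ?thesis by (simp add: cadj_def)
qed

lemma sip_herm: fixes P :: "complex^'n::finite^'n" assumes "hermitian P" shows "sip x (P *v y) = sip (P *v x) y"
proof -
  have "sip x (P *v y) = (\<Sum>i\<in>UNIV. \<Sum>j\<in>UNIV. cnj (x$i) * P$i$j * y$j)"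
    by (simp add: sip_def matrix_vector_mult_def sum_distrib_left mult.assoc)
  also have "\<dots> = (\<Sum>j\<in>UNIV. \<Sum>i\<in>UNIV. cnj (x$i) * P$i$j * y$j)" by (rule sum.swap)
  also have "\<dots> = sip (P *v x) y"
    by (simp add: sip_def matrix_vector_mult_def sum_distrib_right sum_distrib_left herm_entry[OF assms] mult_ac)
  finally show ?thesis .
qed

lemma column_nth[simp]: "(column s P)$i = P$i$s" by (simp add: column_def)

lemma sip_column: fixes P :: "complex^'n::finite^'n" assumes "hermitian P" shows "sip v (column s P) = cnj ((P *v v)$s)"
  by (simp add: sip_def matrix_vector_mult_def herm_entry[OF assms] mult_ac)


lemma mv_shift: fixes P :: "complex^'n::finite^'n" shows "P *v (v - c *s axis s 1) = P *v v - c *s column s P"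
proof -
  have "\<And>i j. P$i$j * ((v - c *s axis s 1)$j) = P$i$j * v$j - (if j = s then c * P$i$s else 0)"
    by (cases "j = s") (auto simp: axis_def algebra_simps)
  then show ?thesis by (simp add: vec_eq_iff matrix_vector_mult_def sum_subtractf)
qed

lemma qf_shift: fixes P :: "complex^'n::finite^'n" assumes "hermitian P"
  shows "sip (v - c *s axis s 1) (P *v (v - c *s axis s 1)) =
     sip v (P *v v) - c * cnj ((P *v v)$s) - cnj c * (P *v v)$s + cnj c * c * P$s$s"
proof -
  have 1: "sip v (column s P) = cnj ((P *v v)$s)" by (rule sip_column[OF assms])
  have 2: "sip (axis s 1) (column s P) = P$s$s" by (simp add: sip_axis_left)
  have 3: "sip (axis s 1) (P *v v) = (P *v v)$s" by (simp add: sip_axis_left)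
  show ?thesis
    unfolding mv_shift sip_diff_left sip_diff_right sip_smult_left sip_smult_right 1 2 3
    by (simp add: algebra_simps)
qed

lemma cnj_mult_self: "cnj a * a = complex_of_real ((cmod a)^2)"
  by (metis complex_norm_square mult.commute)

lemma psd_herm: "psd P \<Longrightarrow> hermitian P" by (simp add: psd_def)
lemma psd_qf: "psd P \<Longrightarrow> 0 \<le> Re (sip v (P *v v))" by (simp add: psd_def sip_def)

lemma mv_axis: "((P::complex^'n::finite^'n) *v axis s 1)$i = P$i$s"
proof -
  have "\<And>j. P$i$j * (axis s 1)$j = (if j = s then P$i$s else 0)" by (simp add: axis_def)
  then show ?thesis by (simp add: matrix_vector_mult_def)
qed

lemma diag_real: "hermitian (P::complex^'n::finite^'n) \<Longrightarrow> P$s$s = complex_of_real (Re (P$s$s))"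
  using herm_entry[of P s s] by (metis Reals_cnj_iff complex_is_Real_iff of_real_Re)

lemma diag_nonneg: "psd (P::complex^'n::finite^'n) \<Longrightarrow> 0 \<le> Re (P$s$s)"
  using psd_qf[of P "axis s 1"] by (simp add: sip_axis_left mv_axis)

lemma col_zero:
  fixes P :: "complex^'n::finite^'n"
  assumes "psd P" "P$s$s = 0" shows "P$i$s = 0"
proof (rule ccontr)
  assume ne: "P$i$s \<noteq> 0"
  define a where "a = P$i$s"
  have H: "hermitian P" using assms(1) by (rule psd_herm)
  have ps: "(P *v axis i 1)$s = cnj a" using herm_entry[OF H, of i s] by (simp add: mv_axis a_def)
  define t :: real where "t = (Re (P$i$i) + 1) / (2 * (cmod a)^2)"
  define c where "c = complex_of_real t * cnj a"
  have "0 \<le> Re (sip (axis i 1 - c *s axis s 1) (P *v (axis i 1 - c *s axis s 1)))"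
    by (rule psd_qf[OF assms(1)])
  also have "sip (axis i 1 - c *s axis s 1) (P *v (axis i 1 - c *s axis s 1)) =
     P$i$i - c * a - cnj c * cnj a"
    unfolding qf_shift[OF H] ps using assms(2) by (simp add: sip_axis_left mv_axis)
  also have "c * a = complex_of_real (t * (cmod a)^2)"
    unfolding c_def using cnj_mult_self[of a] by (simp add: mult_ac)
  also have "cnj c * cnj a = complex_of_real (t * (cmod a)^2)"
    unfolding c_def using cnj_mult_self[of a] by (simp add: mult_ac)
  finally have "0 \<le> Re (P$i$i) - 2 * (t * (cmod a)^2)" by simp
  moreover have "t * (cmod a)^2 = (Re (P$i$i) + 1) / 2"
    using ne unfolding t_def a_def by (simp add: field_simps)
  ultimately show False by simp
qed

lemma psd_decomp_aux:
  fixes S :: "'n::finite set"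
  assumes "finite S"
  shows "\<forall>P::complex^'n^'n. psd P \<and> (\<forall>i. i \<notin> S \<longrightarrow> (\<forall>j. P$i$j = 0)) \<longrightarrow>
          (\<exists>(n::nat) b. \<forall>i j. P$i$j = (\<Sum>l<n. b l $ i * cnj (b l $ j)))"
  using assms
proof (induction S rule: finite_induct)
  case empty
  show ?case
  proof (intro allI impI)
    fix P :: "complex^'n^'n" assume "psd P \<and> (\<forall>i. i \<notin> {} \<longrightarrow> (\<forall>j. P$i$j = 0))"
    then have "\<forall>i j. P$i$j = 0" by simp
    then show "\<exists>(n::nat) b. \<forall>i j. P$i$j = (\<Sum>l<n. b l $ i * cnj (b l $ j))"
      by (intro exI[of _ "0::nat"]) simp
  qed
next
  case (insert s S)
  show ?case
  proof (intro allI impI)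
    fix P :: "complex^'n^'n" assume asm: "psd P \<and> (\<forall>i. i \<notin> insert s S \<longrightarrow> (\<forall>j. P$i$j = 0))"
    then have psdP: "psd P" and zr: "\<And>i j. i \<notin> insert s S \<Longrightarrow> P$i$j = 0" by auto
    have H: "hermitian P" using psdP by (rule psd_herm)
    define d where "d = Re (P$s$s)"
    have dnn: "0 \<le> d" unfolding d_def by (rule diag_nonneg[OF psdP])
    have Pss: "P$s$s = complex_of_real d" unfolding d_def by (rule diag_real[OF H])
    show "\<exists>(n::nat) b. \<forall>i j. P$i$j = (\<Sum>l<n. b l $ i * cnj (b l $ j))"
    proof (cases "d = 0")
      case True
      then have "P$s$s = 0" using Pss by simp
      then have c0: "\<And>i. P$i$s = 0" using col_zero[OF psdP] by blast
      have "\<And>i j. i \<notin> S \<Longrightarrow> P$i$j = 0"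
      proof -
        fix i j assume "i \<notin> S"
        show "P$i$j = 0"
        proof (cases "i = s")
          case True
          then show ?thesis using herm_entry[OF H, of s j] c0[of j] by simp
        next
          case False
          then show ?thesis using zr \<open>i \<notin> S\<close> by simp
        qed
      qed
      then show ?thesis using insert.IH psdP by blast
    next
      case False
      then have dpos: "0 < d" using dnn by simp
      define r where "r = complex_of_real (sqrt d)"
      have r0: "r \<noteq> 0" using dpos by (simp add: r_def)
      have cr: "cnj r = r" by (simp add: r_def)
      have rr: "r * r = complex_of_real d" using dnn by (simp add: r_def flip: of_real_mult)
      define b where "b = (\<chi> i. P$i$s / r)"
      define P' where "P' = (\<chi> i j. P$i$j - b$i * cnj (b$j))"
      have HP': "hermitian P'"
        unfolding hermitian_def cadj_def P'_def
        by (simp add: vec_eq_iff herm_entry[OF H] mult.commute)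
      have P'v: "\<And>v. P' *v v = P *v v - sip b v *s b"
      proof -
        fix v
        have "\<And>i. (P' *v v)$i = (P *v v)$i - sip b v * b$i"
          unfolding P'_def matrix_vector_mult_def sip_def
          by (simp add: right_diff_distrib sum_subtractf sum_distrib_left mult_ac)
        then show "P' *v v = P *v v - sip b v *s b" by (simp add: vec_eq_iff)
      qed
      have sbv: "\<And>v. sip b v = (P *v v)$s / r"
        by (simp add: b_def sip_def matrix_vector_mult_def cr herm_entry[OF H] sum_divide_distrib)
      have psdP': "psd P'"
      proof -
        have "0 \<le> Re (sip v (P' *v v))" for v
        proof -
          define z where "z = (P *v v)$s"
          define c where "c = z / complex_of_real d"
          have "0 \<le> Re (sip (v - c *s axis s 1) (P *v (v - c *s axis s 1)))"
            by (rule psd_qf[OF psdP])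
          also have "sip (v - c *s axis s 1) (P *v (v - c *s axis s 1)) =
              sip v (P *v v) - c * cnj z - cnj c * z + cnj c * c * complex_of_real d"
            unfolding qf_shift[OF H] z_def Pss by simp
          also have "\<dots> = sip v (P *v v) - z * cnj z / complex_of_real d"
            using dpos unfolding c_def by (simp add: field_simps)
          also have "\<dots> = sip v (P' *v v)"
          proof -
            have e1: "sip v b = cnj (sip b v)" by (simp add: sip_cnj)
            have e2: "sip b v * cnj (sip b v) = z * cnj z / (r * r)"
              unfolding sbv z_def by (simp add: cr)
            show ?thesis
              unfolding P'v sip_diff_right sip_smult_right e1 using e2 rr
              by (simp add: mult.commute)
          qed
          finally show ?thesis .
        qed
        then show ?thesis using HP' unfolding psd_def sip_def by simp
      qed
      have zr': "\<And>i j. i \<notin> S \<Longrightarrow> P'$i$j = 0"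
      proof -
        fix i j assume "i \<notin> S"
        show "P'$i$j = 0"
        proof (cases "i = s")
          case True
          have "P'$s$j = P$s$j - P$s$s * cnj (P$j$s) / (r * r)"
            by (simp add: P'_def b_def cr)
          also have "\<dots> = 0" using Pss rr dpos herm_entry[OF H, of j s] by simp
          finally show ?thesis using True by simp
        next
          case False
          then have "i \<notin> insert s S" using \<open>i \<notin> S\<close> by simp
          then show ?thesis using zr by (simp add: P'_def b_def)
        qed
      qed
      have "psd P' \<and> (\<forall>i. i \<notin> S \<longrightarrow> (\<forall>j. P'$i$j = 0))" using psdP' zr' by blast
      then have "\<exists>(n::nat) b'. \<forall>i j. P'$i$j = (\<Sum>l<n. b' l $ i * cnj (b' l $ j))"
        using insert.IH by blast
      then obtain n b' where nb: "\<forall>i j. P'$i$j = (\<Sum>l<(n::nat). b' l $ i * cnj (b' l $ j))"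
        by blast
      define b'' where "b'' = b'(n := b)"
      have "\<forall>i j. P$i$j = (\<Sum>l<Suc n. b'' l $ i * cnj (b'' l $ j))"
      proof (intro allI)
        fix i j
        have "(\<Sum>l<n. b'' l $ i * cnj (b'' l $ j)) = (\<Sum>l<n. b' l $ i * cnj (b' l $ j))"
          by (rule sum.cong) (auto simp: b''_def)
        then have "(\<Sum>l<Suc n. b'' l $ i * cnj (b'' l $ j)) = P'$i$j + b$i * cnj (b$j)"
          using nb by (simp add: b''_def)
        then show "P$i$j = (\<Sum>l<Suc n. b'' l $ i * cnj (b'' l $ j))" by (simp add: P'_def)
      qed
      then show ?thesis by blast
    qed
  qed
qed

lemma psd_decomp:
  fixes P :: "complex^'n::finite^'n"
  assumes "psd P" shows "\<exists>(n::nat) b. \<forall>i j. P$i$j = (\<Sum>l<n. b l $ i * cnj (b l $ j))"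
proof -
  have "\<forall>P::complex^'n^'n. psd P \<longrightarrow> (\<exists>(n::nat) b. \<forall>i j. P$i$j = (\<Sum>l<n. b l $ i * cnj (b l $ j)))"
    using psd_decomp_aux[of "UNIV::'n set"] by simp
  then show ?thesis using assms by blast
qed

lemma swap4: "(\<Sum>a\<in>A. \<Sum>b\<in>B. \<Sum>c\<in>C. \<Sum>d\<in>D. f a b c d) = (\<Sum>c\<in>C. \<Sum>d\<in>D. \<Sum>a\<in>A. \<Sum>b\<in>B. f a b c d)"
proof -
  have "(\<Sum>a\<in>A. \<Sum>b\<in>B. \<Sum>c\<in>C. \<Sum>d\<in>D. f a b c d) = (\<Sum>a\<in>A. \<Sum>c\<in>C. \<Sum>b\<in>B. \<Sum>d\<in>D. f a b c d)"
    by (rule sum.cong[OF refl], rule sum.swap)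
  also have "\<dots> = (\<Sum>c\<in>C. \<Sum>a\<in>A. \<Sum>b\<in>B. \<Sum>d\<in>D. f a b c d)" by (rule sum.swap)
  also have "\<dots> = (\<Sum>c\<in>C. \<Sum>a\<in>A. \<Sum>d\<in>D. \<Sum>b\<in>B. f a b c d)"
    by (rule sum.cong[OF refl], rule sum.cong[OF refl], rule sum.swap)
  also have "\<dots> = (\<Sum>c\<in>C. \<Sum>d\<in>D. \<Sum>a\<in>A. \<Sum>b\<in>B. f a b c d)"
    by (rule sum.cong[OF refl], rule sum.swap)
  finally show ?thesis .
qed

lemma sum_pair: "(\<Sum>p\<in>(UNIV::('a::finite \<times> 'b::finite) set). f p) = (\<Sum>a\<in>UNIV. \<Sum>b\<in>UNIV. f (a,b))"
proof -
  have "(\<Sum>a\<in>UNIV. \<Sum>b\<in>UNIV. f (a,b)) = (\<Sum>p\<in>UNIV\<times>UNIV. (\<lambda>(a,b). f (a,b)) p)"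
    by (rule sum.cartesian_product)
  then show ?thesis by simp
qed

definition tens :: "complex^'k::finite \<Rightarrow> 'm::finite \<Rightarrow> complex^('k \<times> 'm)" where
  "tens x j = (\<chi> p. if snd p = j then x $ fst p else 0)"

lemma sip_tens_left: "sip (tens w j) v = (\<Sum>a\<in>UNIV. cnj (w$a) * v$(a,j))"
proof -
  have "\<And>a b. cnj (tens w j $ (a,b)) * v$(a,b) = (if b = j then cnj (w$a) * v$(a,j) else 0)"
    by (simp add: tens_def)
  then show ?thesis by (simp add: sip_def sum_pair)
qed

lemma mv_tens: "((M::complex^('k::finite\<times>'m::finite)^'n::finite) *v tens u j) $ p = (\<Sum>a\<in>UNIV. M$p$(a,j) * u$a)"
proof -
  have "\<And>a b. M$p$(a,b) * tens u j $ (a,b) = (if b = j then M$p$(a,j) * u$a else 0)"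
    by (simp add: tens_def)
  then show ?thesis by (simp add: matrix_vector_mult_def sum_pair)
qed

definition hh :: "('k::finite \<times> 'm::finite) cmat \<Rightarrow> complex^'k \<Rightarrow> complex^'k \<Rightarrow> 'm \<Rightarrow> 'm \<Rightarrow> complex" where
  "hh \<gamma> w u j j' = sip (tens w j) (\<gamma> *v tens u j')"

lemma hh_expand: "hh \<gamma> w u j j' = (\<Sum>a\<in>UNIV. \<Sum>a'\<in>UNIV. cnj (w$a) * \<gamma>$(a,j)$(a',j') * u$a')"
  by (simp add: hh_def sip_tens_left mv_tens sum_distrib_left mult_ac)

lemma I1:
  fixes \<gamma> :: "('k::finite \<times> 'm::finite) cmat"
  shows "sip w (FG \<gamma> X *v u) = (\<Sum>j\<in>UNIV. \<Sum>j'\<in>UNIV. hh \<gamma> w u j j' * Gmap \<gamma> X $ j' $ j)"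
proof -
  define G where "G = Gmap \<gamma> X"
  have "sip w (FG \<gamma> X *v u) = (\<Sum>a\<in>UNIV. \<Sum>a'\<in>UNIV. \<Sum>j\<in>UNIV. \<Sum>j'\<in>UNIV.
          cnj (w$a) * \<gamma>$(a,j)$(a',j') * u$a' * G$j'$j)"
    by (simp add: sip_def FG_def Fmap_def G_def matrix_vector_mult_def sum_distrib_left sum_distrib_right mult_ac)
  also have "\<dots> = (\<Sum>j\<in>UNIV. \<Sum>j'\<in>UNIV. \<Sum>a\<in>UNIV. \<Sum>a'\<in>UNIV.
          cnj (w$a) * \<gamma>$(a,j)$(a',j') * u$a' * G$j'$j)" by (rule swap4)
  also have "\<dots> = (\<Sum>j\<in>UNIV. \<Sum>j'\<in>UNIV. hh \<gamma> w u j j' * G $ j' $ j)"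
    by (simp add: hh_expand sum_distrib_right)
  finally show ?thesis by (simp add: G_def)
qed

definition outer :: "complex^'n::finite \<Rightarrow> complex^'n \<Rightarrow> 'n cmat" where
  "outer x y = (\<chi> i j. x$i * cnj (y$j))"

lemma Gout: "Gmap \<gamma> (outer x y) $ j' $ j = hh \<gamma> y x j' j"
  by (simp add: Gmap_def outer_def hh_expand mult_ac)

lemma sip_dec:
  fixes \<gamma> :: "complex^'n::finite^'n"
  assumes "\<forall>i j. \<gamma>$i$j = (\<Sum>l<n. b l $ i * cnj (b l $ j))"
  shows "sip p (\<gamma> *v q) = (\<Sum>l<(n::nat). sip p (b l) * sip (b l) q)"
proof -
  have "sip p (\<gamma> *v q) = (\<Sum>i\<in>UNIV. \<Sum>j\<in>UNIV. \<Sum>l<n. cnj (p$i) * b l $ i * (cnj (b l $ j) * q$j))"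
    using assms by (simp add: sip_def matrix_vector_mult_def sum_distrib_left sum_distrib_right mult_ac)
  also have "\<dots> = (\<Sum>i\<in>UNIV. \<Sum>l<n. \<Sum>j\<in>UNIV. cnj (p$i) * b l $ i * (cnj (b l $ j) * q$j))"
    by (rule sum.cong[OF refl], rule sum.swap)
  also have "\<dots> = (\<Sum>l<n. \<Sum>i\<in>UNIV. \<Sum>j\<in>UNIV. cnj (p$i) * b l $ i * (cnj (b l $ j) * q$j))"
    by (rule sum.swap)
  also have "\<dots> = (\<Sum>l<(n::nat). sip p (b l) * sip (b l) q)"
    by (simp add: sip_def sum_product)
  finally show ?thesis .
qed

definition DD :: "('k::finite \<times> 'm::finite) cmat \<Rightarrow> complex^'k \<Rightarrow> complex^'k \<Rightarrow> bool" where
  "DD \<gamma> x w \<longleftrightarrow> (\<forall>p q. (\<Sum>j\<in>UNIV. sip p (\<gamma> *v tens x j) * sip (tens w j) (\<gamma> *v q)) = 0)"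

lemma sum_sq_zero:
  fixes c :: "nat \<Rightarrow> nat \<Rightarrow> complex"
  assumes "(\<Sum>l<n. \<Sum>l'<n. c l l' * cnj (c l l')) = 0"
  shows "\<forall>l<n. \<forall>l'<n. c l l' = 0"
proof -
  have e: "\<And>l l'. c l l' * cnj (c l l') = complex_of_real ((cmod (c l l'))^2)"
    using cnj_mult_self by (simp add: mult.commute)
  have "complex_of_real (\<Sum>l<n. \<Sum>l'<n. (cmod (c l l'))^2) = 0"
    using assms by (simp add: e)
  then have "(\<Sum>l<n. \<Sum>l'<n. (cmod (c l l'))^2) = 0" by (simp only: of_real_eq_0_iff)
  then have "\<forall>l\<in>{..<n}. (\<Sum>l'<n. (cmod (c l l'))^2) = 0"
    by (subst sum_nonneg_eq_0_iff[symmetric]) (auto intro: sum_nonneg)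
  then show ?thesis by (simp add: sum_nonneg_eq_0_iff)
qed

lemma PSD0:
  fixes \<gamma> :: "('k::finite \<times> 'm::finite) cmat"
  assumes "psd \<gamma>" and S0: "(\<Sum>j\<in>UNIV. \<Sum>j'\<in>UNIV. hh \<gamma> w w j j' * hh \<gamma> x x j' j) = 0"
  shows "DD \<gamma> x w"
proof -
  obtain n :: nat and b where dec: "\<forall>i j. \<gamma>$i$j = (\<Sum>l<n. b l $ i * cnj (b l $ j))"
    using psd_decomp[OF assms(1)] by blast
  note sd = sip_dec[OF dec]
  define c where "c l l' = (\<Sum>j\<in>UNIV. sip (b l') (tens x j) * sip (tens w j) (b l))" for l l'
  define T where "T l l' j j' = (sip (tens w j) (b l) * sip (b l) (tens w j')) *
      (sip (tens x j') (b l') * sip (b l') (tens x j))" for l l' j j'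
  have "(\<Sum>j\<in>UNIV. \<Sum>j'\<in>UNIV. hh \<gamma> w w j j' * hh \<gamma> x x j' j) =
        (\<Sum>j\<in>UNIV. \<Sum>j'\<in>UNIV. \<Sum>l<n. \<Sum>l'<n. T l l' j j')"
    by (simp add: hh_def sd T_def sum_product)
  also have "\<dots> = (\<Sum>l<n. \<Sum>l'<n. \<Sum>j\<in>UNIV. \<Sum>j'\<in>UNIV. T l l' j j')" by (rule swap4)
  also have "\<dots> = (\<Sum>l<n. \<Sum>l'<n. c l l' * cnj (c l l'))"
  proof -
    have "\<And>l l'. c l l' * cnj (c l l') = (\<Sum>j\<in>UNIV. \<Sum>j'\<in>UNIV. T l l' j j')"
      by (simp add: c_def T_def sum_product sip_cnj mult_ac, rule sum.swap)
    then show ?thesis by simp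
  qed
  finally have "(\<Sum>l<n. \<Sum>l'<n. c l l' * cnj (c l l')) = 0" using S0 by simp
  then have cz: "\<forall>l<n. \<forall>l'<n. c l l' = 0" by (rule sum_sq_zero)
  show ?thesis unfolding DD_def
  proof (intro allI)
    fix p q
    define U where "U j l' l = sip p (b l') * sip (b l') (tens x j) * (sip (tens w j) (b l) * sip (b l) q)" for j l' l
    have "(\<Sum>j\<in>UNIV. sip p (\<gamma> *v tens x j) * sip (tens w j) (\<gamma> *v q)) =
          (\<Sum>j\<in>UNIV. \<Sum>l'<n. \<Sum>l<n. U j l' l)"
      by (simp add: sd U_def sum_product)
    also have "\<dots> = (\<Sum>l'<n. \<Sum>j\<in>UNIV. \<Sum>l<n. U j l' l)" by (rule sum.swap)
    also have "\<dots> = (\<Sum>l'<n. \<Sum>l<n. \<Sum>j\<in>UNIV. U j l' l)"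
      by (rule sum.cong[OF refl], rule sum.swap)
    also have "\<dots> = (\<Sum>l'<n. \<Sum>l<n. sip p (b l') * c l l' * sip (b l) q)"
      by (simp add: U_def c_def sum_distrib_left sum_distrib_right mult_ac)
    also have "\<dots> = 0" using cz by simp
    finally show "(\<Sum>j\<in>UNIV. sip p (\<gamma> *v tens x j) * sip (tens w j) (\<gamma> *v q)) = 0" .
  qed
qed

lemma DD_transfer:
  fixes \<gamma> A :: "('k::finite \<times> 'm::finite) cmat"
  assumes "hermitian \<gamma>" "hermitian A" "img \<gamma> = img A" "DD \<gamma> x w"
  shows "DD A x w"
  unfolding DD_def
proof (intro allI)
  fix p q
  have "A *v p \<in> img \<gamma>" "A *v q \<in> img \<gamma>" using assms(3) by (auto simp: img_def)
  then obtain p' q' where pq: "A *v p = \<gamma> *v p'" "A *v q = \<gamma> *v q'" by (auto simp: img_def)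
  have "(\<Sum>j\<in>UNIV. sip p (A *v tens x j) * sip (tens w j) (A *v q)) =
        (\<Sum>j\<in>UNIV. sip (A *v p) (tens x j) * sip (tens w j) (A *v q))"
    by (simp add: sip_herm[OF assms(2)])
  also have "\<dots> = (\<Sum>j\<in>UNIV. sip p' (\<gamma> *v tens x j) * sip (tens w j) (\<gamma> *v q'))"
    by (simp add: pq sip_herm[OF assms(1)])
  also have "\<dots> = 0" using assms(4) by (simp add: DD_def)
  finally show "(\<Sum>j\<in>UNIV. sip p (A *v tens x j) * sip (tens w j) (A *v q)) = 0" .
qed

lemma DD_conj:
  fixes \<gamma> :: "('k::finite \<times> 'm::finite) cmat"
  assumes "hermitian \<gamma>" "DD \<gamma> y w"
  shows "(\<Sum>j\<in>UNIV. sip q (\<gamma> *v tens w j) * sip (tens y j) (\<gamma> *v p)) = 0"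
proof -
  have "(\<Sum>j\<in>UNIV. sip p (\<gamma> *v tens y j) * sip (tens w j) (\<gamma> *v q)) = 0"
    using assms(2) by (simp add: DD_def)
  then have "cnj (\<Sum>j\<in>UNIV. sip p (\<gamma> *v tens y j) * sip (tens w j) (\<gamma> *v q)) = 0" by simp
  moreover have "cnj (\<Sum>j\<in>UNIV. sip p (\<gamma> *v tens y j) * sip (tens w j) (\<gamma> *v q)) =
     (\<Sum>j\<in>UNIV. sip q (\<gamma> *v tens w j) * sip (tens y j) (\<gamma> *v p))"
    by (simp add: sip_cnj sip_herm[OF assms(1)] mult.commute)
  ultimately show ?thesis by simp
qed

lemma mm_diff_left: "((A::complex^'n::finite^'m::finite) - B) ** (C::complex^'p::finite^'n) = A ** C - B ** C"
  by (simp add: matrix_matrix_mult_def vec_eq_iff left_diff_distrib sum_subtractf)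
lemma mm_diff_right: "(A::complex^'n::finite^'m::finite) ** ((B::complex^'p::finite^'n) - C) = A ** B - A ** C"
  by (simp add: matrix_matrix_mult_def vec_eq_iff right_diff_distrib sum_subtractf)
lemma mv_diff_mat: "((A::complex^'n::finite^'m::finite) - B) *v v = A *v v - B *v v"
  by (simp add: matrix_vector_mult_def vec_eq_iff left_diff_distrib sum_subtractf)

lemma op_herm: "orth_proj W \<Longrightarrow> hermitian W" by (simp add: orth_proj_def hermitian_def)
lemma op_idem: "orth_proj W \<Longrightarrow> W ** W = W" by (simp add: orth_proj_def)

lemma cadj_diff: "cadj (A - B) = cadj A - cadj (B::'n::finite cmat)"
  by (simp add: cadj_def vec_eq_iff)
lemma cadj_mat1: "cadj (mat 1 :: 'n::finite cmat) = mat 1"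
  by (simp add: cadj_def vec_eq_iff mat_def)

lemma perp_herm: "orth_proj W \<Longrightarrow> hermitian (perp W)"
  by (simp add: hermitian_def perp_def cadj_diff cadj_mat1 orth_proj_def)
lemma W_perp: "orth_proj W \<Longrightarrow> W ** perp W = 0"
  by (simp add: perp_def mm_diff_right op_idem)
lemma perp_W: "orth_proj W \<Longrightarrow> perp W ** W = 0"
  by (simp add: perp_def mm_diff_left op_idem)
lemma W_eq_perp: "W = mat 1 - perp W" by (simp add: perp_def)

lemma W_perp_v: "orth_proj W \<Longrightarrow> W *v (perp W *v w) = 0"
  by (simp add: matrix_vector_mul_assoc W_perp)

lemma outer_left: "(W::'n::finite cmat) ** outer x y = outer (W *v x) y"
  by (simp add: outer_def matrix_matrix_mult_def matrix_vector_mult_def vec_eq_iff sum_distrib_right sum_distrib_left mult_ac)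
lemma outer_right: "outer x y ** (W::'n::finite cmat) = outer x (cadj W *v y)"
  by (simp add: outer_def matrix_matrix_mult_def matrix_vector_mult_def cadj_def vec_eq_iff sum_distrib_left mult_ac)

lemma mm_entry1:
  fixes P M :: "'n::finite cmat"
  assumes "hermitian P" shows "(P ** M)$i$k = sip (P *v axis i 1) (M *v axis k 1)"
  by (simp add: sip_herm[OF assms, symmetric] sip_axis_left matrix_vector_mul_assoc mv_axis)

lemma mm_entry2:
  fixes P M :: "'n::finite cmat"
  shows "(M ** P)$i$k = sip (axis i 1) (M *v (P *v axis k 1))"
  by (simp add: sip_axis_left matrix_vector_mul_assoc mv_axis)

lemma Inv_DD:
  fixes \<gamma> :: "('k::finite \<times> 'm::finite) cmat"
  assumes "psd \<gamma>" "orth_proj W" "FG \<gamma> ` sandw W W \<subseteq> sandw W W"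
  shows "DD \<gamma> (W *v x) (perp W *v w)"
proof -
  define x' where "x' = W *v x"
  define w' where "w' = perp W *v w"
  have Wx: "W *v x' = x'" unfolding x'_def matrix_vector_mul_assoc op_idem[OF assms(2)] ..
  have cW: "cadj W = W" using assms(2) by (simp add: orth_proj_def)
  have "W ** outer x' x' ** W = outer x' x'"
    by (simp add: outer_left outer_right Wx cW)
  then have "outer x' x' \<in> sandw W W" unfolding sandw_def by (metis (mono_tags, lifting) mem_Collect_eq)
  then have "FG \<gamma> (outer x' x') \<in> sandw W W" using assms(3) by blast
  then obtain E where E: "FG \<gamma> (outer x' x') = W ** E ** W" by (auto simp: sandw_def)
  have "FG \<gamma> (outer x' x') *v w' = 0"
    unfolding E w'_def by (simp add: matrix_vector_mul_assoc[symmetric] W_perp_v[OF assms(2)])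
  then have "sip w' (FG \<gamma> (outer x' x') *v w') = 0" by simp
  then have "(\<Sum>j\<in>UNIV. \<Sum>j'\<in>UNIV. hh \<gamma> w' w' j j' * hh \<gamma> x' x' j' j) = 0"
    by (simp add: I1 Gout)
  then show ?thesis unfolding x'_def w'_def by (rule PSD0[OF assms(1)])
qed

lemma Gsandw:
  fixes \<gamma> :: "('k::finite \<times> 'm::finite) cmat"
  assumes "hermitian W"
  shows "Gmap \<gamma> (W ** E ** W) $ j' $ j =
     (\<Sum>b\<in>UNIV. \<Sum>c\<in>UNIV. E$b$c * hh \<gamma> (W *v axis c 1) (W *v axis b 1) j' j)"
proof -
  have "Gmap \<gamma> (W ** E ** W) $ j' $ j = (\<Sum>a\<in>UNIV. \<Sum>a'\<in>UNIV. \<Sum>c\<in>UNIV. \<Sum>b\<in>UNIV.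
      E$b$c * (W$c$a * \<gamma>$(a,j')$(a',j) * W$a'$b))"
    by (simp add: Gmap_def matrix_matrix_mult_def sum_distrib_left sum_distrib_right mult_ac)
  also have "\<dots> = (\<Sum>c\<in>UNIV. \<Sum>b\<in>UNIV. \<Sum>a\<in>UNIV. \<Sum>a'\<in>UNIV.
      E$b$c * (W$c$a * \<gamma>$(a,j')$(a',j) * W$a'$b))" by (rule swap4)
  also have "\<dots> = (\<Sum>c\<in>UNIV. \<Sum>b\<in>UNIV. E$b$c * hh \<gamma> (W *v axis c 1) (W *v axis b 1) j' j)"
    by (simp add: hh_expand mv_axis herm_entry[OF assms] sum_distrib_left)
  also have "\<dots> = (\<Sum>b\<in>UNIV. \<Sum>c\<in>UNIV. E$b$c * hh \<gamma> (W *v axis c 1) (W *v axis b 1) j' j)"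
    by (rule sum.swap)
  finally show ?thesis .
qed

lemma sip_FG_sandw:
  fixes \<gamma> :: "('k::finite \<times> 'm::finite) cmat"
  assumes "hermitian W"
  shows "sip w (FG \<gamma> (W ** E ** W) *v u) = (\<Sum>b\<in>UNIV. \<Sum>c\<in>UNIV. E$b$c *
     (\<Sum>j\<in>UNIV. \<Sum>j'\<in>UNIV. hh \<gamma> w u j j' * hh \<gamma> (W *v axis c 1) (W *v axis b 1) j' j))"
proof -
  have "sip w (FG \<gamma> (W ** E ** W) *v u) = (\<Sum>j\<in>UNIV. \<Sum>j'\<in>UNIV. \<Sum>b\<in>UNIV. \<Sum>c\<in>UNIV.
     E$b$c * (hh \<gamma> w u j j' * hh \<gamma> (W *v axis c 1) (W *v axis b 1) j' j))"
    by (simp add: I1 Gsandw[OF assms] sum_distrib_left mult_ac)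
  also have "\<dots> = (\<Sum>b\<in>UNIV. \<Sum>c\<in>UNIV. \<Sum>j\<in>UNIV. \<Sum>j'\<in>UNIV.
     E$b$c * (hh \<gamma> w u j j' * hh \<gamma> (W *v axis c 1) (W *v axis b 1) j' j))" by (rule swap4)
  finally show ?thesis by (simp add: sum_distrib_left)
qed

lemma DD_Inv:
  fixes \<gamma> :: "('k::finite \<times> 'm::finite) cmat"
  assumes H: "hermitian \<gamma>" and W: "orth_proj W" and D: "\<forall>x w. DD \<gamma> (W *v x) (perp W *v w)"
  shows "FG \<gamma> ` sandw W W \<subseteq> sandw W W"
proof
  fix Y assume "Y \<in> FG \<gamma> ` sandw W W"
  then obtain E where Y: "Y = FG \<gamma> (W ** E ** W)" by (auto simp: sandw_def)
  have HW: "hermitian W" using W by (rule op_herm)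
  define Wp where "Wp = perp W"
  have HWp: "hermitian Wp" unfolding Wp_def using W by (rule perp_herm)
  have A: "sip (Wp *v w0) (Y *v u) = 0" for w0 u
  proof -
    have "\<And>b c. (\<Sum>j\<in>UNIV. \<Sum>j'\<in>UNIV. hh \<gamma> (Wp *v w0) u j j' * hh \<gamma> (W *v axis c 1) (W *v axis b 1) j' j) = 0"
    proof -
      fix b c
      have "(\<Sum>j\<in>UNIV. \<Sum>j'\<in>UNIV. hh \<gamma> (Wp *v w0) u j j' * hh \<gamma> (W *v axis c 1) (W *v axis b 1) j' j)
        = (\<Sum>j'\<in>UNIV. \<Sum>j\<in>UNIV. sip (tens (W *v axis c 1) j') (\<gamma> *v tens (W *v axis b 1) j) *
             sip (tens (Wp *v w0) j) (\<gamma> *v tens u j'))"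
        by (subst sum.swap) (simp add: hh_def mult.commute)
      also have "\<dots> = 0"
        using D unfolding DD_def Wp_def by simp
      finally show "(\<Sum>j\<in>UNIV. \<Sum>j'\<in>UNIV. hh \<gamma> (Wp *v w0) u j j' * hh \<gamma> (W *v axis c 1) (W *v axis b 1) j' j) = 0" .
    qed
    then show ?thesis unfolding Y by (simp add: sip_FG_sandw[OF HW])
  qed
  have B: "sip u (Y *v (Wp *v w0)) = 0" for w0 u
  proof -
    have "\<And>b c. (\<Sum>j\<in>UNIV. \<Sum>j'\<in>UNIV. hh \<gamma> u (Wp *v w0) j j' * hh \<gamma> (W *v axis c 1) (W *v axis b 1) j' j) = 0"
    proof -
      fix b c
      have DD1: "DD \<gamma> (W *v axis c 1) (Wp *v w0)" using D unfolding Wp_def by blast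
      have "(\<Sum>j\<in>UNIV. \<Sum>j'\<in>UNIV. hh \<gamma> u (Wp *v w0) j j' * hh \<gamma> (W *v axis c 1) (W *v axis b 1) j' j)
        = (\<Sum>j\<in>UNIV. \<Sum>j'\<in>UNIV. sip (tens u j) (\<gamma> *v tens (Wp *v w0) j') *
             sip (tens (W *v axis c 1) j') (\<gamma> *v tens (W *v axis b 1) j))"
        by (simp add: hh_def)
      also have "\<dots> = 0"
        using DD_conj[OF H DD1] by simp
      finally show "(\<Sum>j\<in>UNIV. \<Sum>j'\<in>UNIV. hh \<gamma> u (Wp *v w0) j j' * hh \<gamma> (W *v axis c 1) (W *v axis b 1) j' j) = 0" .
    qed
    then show ?thesis unfolding Y by (simp add: sip_FG_sandw[OF HW])
  qed
  have L: "Wp ** Y = 0"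
    by (simp add: vec_eq_iff mm_entry1[OF HWp] A)
  have R: "Y ** Wp = 0"
    by (simp add: vec_eq_iff mm_entry2 B)
  have e: "W = mat 1 - Wp" by (simp add: Wp_def perp_def)
  have "(mat 1 - Wp) ** Y ** (mat 1 - Wp) = Y"
    by (simp add: mm_diff_left mm_diff_right L R)
  then have "W ** Y ** W = Y" using e by simp
  then show "Y \<in> sandw W W" unfolding sandw_def by (metis (mono_tags, lifting) mem_Collect_eq)
qed

lemma Inv_transfer:
  fixes \<gamma> A :: "('k::finite \<times> 'm::finite) cmat"
  assumes "psd \<gamma>" "psd A" "img \<gamma> = img A" "orth_proj W" "FG \<gamma> ` sandw W W \<subseteq> sandw W W"
  shows "FG A ` sandw W W \<subseteq> sandw W W"
proof -
  have "\<forall>x w. DD A (W *v x) (perp W *v w)"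
    using Inv_DD[OF assms(1,4,5)] DD_transfer[OF psd_herm[OF assms(1)] psd_herm[OF assms(2)] assms(3)]
    by blast
  then show ?thesis by (rule DD_Inv[OF psd_herm[OF assms(2)] assms(4)])
qed

lemma tinner_sum: "tinner X Y = (\<Sum>i\<in>UNIV. \<Sum>k\<in>UNIV. X$i$k * cnj (Y$i$k))"
  by (simp add: tinner_def mtrace_def matrix_matrix_mult_def cadj_def)

lemma tinner_cnj: "cnj (tinner X Y) = tinner Y X"
  by (simp add: tinner_sum mult.commute)

lemma adjG:
  fixes \<gamma> :: "('k::finite \<times> 'm::finite) cmat"
  assumes H: "hermitian \<gamma>"
  shows "tinner (Gmap \<gamma> X) Y = tinner X (Fmap \<gamma> Y)"
proof -
  define f where "f j j' a a' = \<gamma>$(a,j)$(a',j') * X$a'$a * cnj (Y$j$j')" for j j' a a'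
  have "tinner (Gmap \<gamma> X) Y = (\<Sum>j\<in>UNIV. \<Sum>j'\<in>UNIV. \<Sum>a\<in>UNIV. \<Sum>a'\<in>UNIV. f j j' a a')"
    by (simp add: tinner_sum Gmap_def f_def sum_distrib_right)
  also have "\<dots> = (\<Sum>j\<in>UNIV. \<Sum>j'\<in>UNIV. \<Sum>a'\<in>UNIV. \<Sum>a\<in>UNIV. f j j' a a')"
    by (rule sum.cong[OF refl], rule sum.cong[OF refl], rule sum.swap)
  also have "\<dots> = (\<Sum>j'\<in>UNIV. \<Sum>j\<in>UNIV. \<Sum>a'\<in>UNIV. \<Sum>a\<in>UNIV. f j j' a a')"
    by (rule sum.swap)
  also have "\<dots> = (\<Sum>a'\<in>UNIV. \<Sum>a\<in>UNIV. \<Sum>j'\<in>UNIV. \<Sum>j\<in>UNIV. f j j' a a')"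
    by (rule swap4)
  also have "\<dots> = tinner X (Fmap \<gamma> Y)"
    by (simp add: tinner_sum Fmap_def f_def sum_distrib_left herm_entry[OF H] mult_ac)
  finally show ?thesis .
qed

lemma adjF:
  fixes \<gamma> :: "('k::finite \<times> 'm::finite) cmat"
  assumes H: "hermitian \<gamma>"
  shows "tinner (Fmap \<gamma> Y) X = tinner Y (Gmap \<gamma> X)"
  by (metis adjG[OF H] tinner_cnj)

lemma FG_selfadj:
  fixes \<gamma> :: "('k::finite \<times> 'm::finite) cmat"
  assumes H: "hermitian \<gamma>"
  shows "self_adjoint_map (FG \<gamma>)"
  unfolding self_adjoint_map_def FG_def comp_def
  by (simp add: adjF[OF H] adjG[OF H, symmetric])

lemma sum_sq_zero1:
  fixes c :: "'a::finite \<Rightarrow> complex"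
  assumes "(\<Sum>l\<in>UNIV. c l * cnj (c l)) = 0"
  shows "c l = 0"
proof -
  have e: "\<And>l. c l * cnj (c l) = complex_of_real ((cmod (c l))^2)"
    using cnj_mult_self by (simp add: mult.commute)
  have "complex_of_real (\<Sum>l\<in>UNIV. (cmod (c l))^2) = 0"
    using assms by (simp add: e)
  then have "(\<Sum>l\<in>UNIV. (cmod (c l))^2) = 0" by (simp only: of_real_eq_0_iff)
  then have "\<forall>l\<in>UNIV. (cmod (c l))^2 = 0"
    by (subst sum_nonneg_eq_0_iff[symmetric]) auto
  then show ?thesis by simp
qed

lemma tinner_self_zero: "tinner (Y::'n::finite cmat) Y = 0 \<Longrightarrow> Y = 0"
proof -
  assume a: "tinner Y Y = 0"
  have "(\<Sum>p\<in>UNIV. Y$fst p$snd p * cnj (Y$fst p$snd p)) = 0"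
    using a unfolding tinner_sum by (simp add: sum_pair)
  then have "\<And>p. Y$fst p$snd p = 0" by (rule sum_sq_zero1)
  then have "\<And>i k. Y$i$k = 0" by (metis fst_conv snd_conv)
  then show ?thesis by (simp add: vec_eq_iff)
qed

lemma sip_self_zero: "sip (y::complex^'n::finite) y = 0 \<Longrightarrow> y = 0"
proof -
  assume a: "sip y y = 0"
  have "(\<Sum>i\<in>UNIV. y$i * cnj (y$i)) = 0"
    using a by (simp add: sip_def mult.commute)
  then have "\<And>i. y$i = 0" by (rule sum_sq_zero1)
  then show ?thesis by (simp add: vec_eq_iff)
qed

lemma posG:
  fixes \<gamma> :: "('k::finite \<times> 'm::finite) cmat"
  assumes "psd \<gamma>" "psd X"
  shows "psd (Gmap \<gamma> X)"
proof -
  have H: "hermitian \<gamma>" and HX: "hermitian X" using assms by (simp_all add: psd_def)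
  have herm: "hermitian (Gmap \<gamma> X)"
  proof -
    have "\<And>i k. cnj (Gmap \<gamma> X $ k $ i) = Gmap \<gamma> X $ i $ k"
    proof -
      fix i k
      have "cnj (Gmap \<gamma> X $ k $ i) = (\<Sum>a\<in>UNIV. \<Sum>a'\<in>UNIV. \<gamma>$(a',i)$(a,k) * X$a$a')"
        by (simp add: Gmap_def herm_entry[OF H] herm_entry[OF HX])
      also have "\<dots> = Gmap \<gamma> X $ i $ k" by (simp add: Gmap_def) (rule sum.swap)
      finally show "cnj (Gmap \<gamma> X $ k $ i) = Gmap \<gamma> X $ i $ k" .
    qed
    then show ?thesis by (simp add: hermitian_def cadj_def vec_eq_iff)
  qed
  obtain n :: nat and x where dec: "\<forall>i j. X$i$j = (\<Sum>l<n. x l $ i * cnj (x l $ j))"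
    using psd_decomp[OF assms(2)] by blast
  have "0 \<le> Re (sip v (Gmap \<gamma> X *v v))" for v
  proof -
    define tv where "tv l = (\<chi> p. x l $ fst p * v $ snd p)" for l
    define f where "f l a j a' j' = cnj (x l $ a) * cnj (v$j) * \<gamma>$(a,j)$(a',j') * (x l $ a' * v $ j')"
      for l a j a' j'
    have "sip v (Gmap \<gamma> X *v v) = (\<Sum>j\<in>UNIV. \<Sum>j'\<in>UNIV. \<Sum>a\<in>UNIV. \<Sum>a'\<in>UNIV. \<Sum>l<n. f l a j a' j')"
      by (simp add: sip_def matrix_vector_mult_def Gmap_def dec f_def sum_distrib_left sum_distrib_right mult_ac)
    also have "\<dots> = (\<Sum>j\<in>UNIV. \<Sum>j'\<in>UNIV. \<Sum>a\<in>UNIV. \<Sum>l<n. \<Sum>a'\<in>UNIV. f l a j a' j')"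
      by (rule sum.cong[OF refl], rule sum.cong[OF refl], rule sum.cong[OF refl], rule sum.swap)
    also have "\<dots> = (\<Sum>j\<in>UNIV. \<Sum>j'\<in>UNIV. \<Sum>l<n. \<Sum>a\<in>UNIV. \<Sum>a'\<in>UNIV. f l a j a' j')"
      by (rule sum.cong[OF refl], rule sum.cong[OF refl], rule sum.swap)
    also have "\<dots> = (\<Sum>j\<in>UNIV. \<Sum>l<n. \<Sum>j'\<in>UNIV. \<Sum>a\<in>UNIV. \<Sum>a'\<in>UNIV. f l a j a' j')"
      by (rule sum.cong[OF refl], rule sum.swap)
    also have "\<dots> = (\<Sum>l<n. \<Sum>j\<in>UNIV. \<Sum>j'\<in>UNIV. \<Sum>a\<in>UNIV. \<Sum>a'\<in>UNIV. f l a j a' j')"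
      by (rule sum.swap)
    also have "\<dots> = (\<Sum>l<n. \<Sum>a\<in>UNIV. \<Sum>a'\<in>UNIV. \<Sum>j\<in>UNIV. \<Sum>j'\<in>UNIV. f l a j a' j')"
      by (rule sum.cong[OF refl], rule swap4)
    also have "\<dots> = (\<Sum>l<n. \<Sum>a\<in>UNIV. \<Sum>j\<in>UNIV. \<Sum>a'\<in>UNIV. \<Sum>j'\<in>UNIV. f l a j a' j')"
      by (rule sum.cong[OF refl], rule sum.cong[OF refl], rule sum.swap)
    also have "\<dots> = (\<Sum>l<n. sip (tv l) (\<gamma> *v tv l))"
      by (simp add: sip_def matrix_vector_mult_def sum_pair tv_def f_def sum_distrib_left sum_distrib_right mult_ac)
    finally have "sip v (Gmap \<gamma> X *v v) = (\<Sum>l<n. sip (tv l) (\<gamma> *v tv l))" .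
    then have "Re (sip v (Gmap \<gamma> X *v v)) = (\<Sum>l<n. Re (sip (tv l) (\<gamma> *v tv l)))" by simp
    also have "\<dots> \<ge> 0" by (rule sum_nonneg) (rule psd_qf[OF assms(1)])
    finally show ?thesis .
  qed
  then show ?thesis using herm unfolding psd_def sip_def by simp
qed

lemma posF:
  fixes \<gamma> :: "('k::finite \<times> 'm::finite) cmat"
  assumes "psd \<gamma>" "psd Y"
  shows "psd (Fmap \<gamma> Y)"
proof -
  have H: "hermitian \<gamma>" and HY: "hermitian Y" using assms by (simp_all add: psd_def)
  have herm: "hermitian (Fmap \<gamma> Y)"
  proof -
    have "\<And>i k. cnj (Fmap \<gamma> Y $ k $ i) = Fmap \<gamma> Y $ i $ k"
    proof -
      fix i k
      have "cnj (Fmap \<gamma> Y $ k $ i) = (\<Sum>j\<in>UNIV. \<Sum>j'\<in>UNIV. \<gamma>$(i,j')$(k,j) * Y$j$j')"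
        by (simp add: Fmap_def herm_entry[OF H] herm_entry[OF HY])
      also have "\<dots> = Fmap \<gamma> Y $ i $ k" by (simp add: Fmap_def) (rule sum.swap)
      finally show "cnj (Fmap \<gamma> Y $ k $ i) = Fmap \<gamma> Y $ i $ k" .
    qed
    then show ?thesis by (simp add: hermitian_def cadj_def vec_eq_iff)
  qed
  obtain n :: nat and y where dec: "\<forall>i j. Y$i$j = (\<Sum>l<n. y l $ i * cnj (y l $ j))"
    using psd_decomp[OF assms(2)] by blast
  have "0 \<le> Re (sip v (Fmap \<gamma> Y *v v))" for v
  proof -
    define tv where "tv l = (\<chi> p. v $ fst p * y l $ snd p)" for l
    define f where "f l a j a' j' = cnj (v $ a) * cnj (y l $ j) * \<gamma>$(a,j)$(a',j') * (v $ a' * y l $ j')"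
      for l a j a' j'
    have "sip v (Fmap \<gamma> Y *v v) = (\<Sum>a\<in>UNIV. \<Sum>a'\<in>UNIV. \<Sum>j\<in>UNIV. \<Sum>j'\<in>UNIV. \<Sum>l<n. f l a j a' j')"
      by (simp add: sip_def matrix_vector_mult_def Fmap_def dec f_def sum_distrib_left sum_distrib_right mult_ac)
    also have "\<dots> = (\<Sum>a\<in>UNIV. \<Sum>a'\<in>UNIV. \<Sum>j\<in>UNIV. \<Sum>l<n. \<Sum>j'\<in>UNIV. f l a j a' j')"
      by (rule sum.cong[OF refl], rule sum.cong[OF refl], rule sum.cong[OF refl], rule sum.swap)
    also have "\<dots> = (\<Sum>a\<in>UNIV. \<Sum>a'\<in>UNIV. \<Sum>l<n. \<Sum>j\<in>UNIV. \<Sum>j'\<in>UNIV. f l a j a' j')"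
      by (rule sum.cong[OF refl], rule sum.cong[OF refl], rule sum.swap)
    also have "\<dots> = (\<Sum>a\<in>UNIV. \<Sum>l<n. \<Sum>a'\<in>UNIV. \<Sum>j\<in>UNIV. \<Sum>j'\<in>UNIV. f l a j a' j')"
      by (rule sum.cong[OF refl], rule sum.swap)
    also have "\<dots> = (\<Sum>l<n. \<Sum>a\<in>UNIV. \<Sum>a'\<in>UNIV. \<Sum>j\<in>UNIV. \<Sum>j'\<in>UNIV. f l a j a' j')"
      by (rule sum.swap)
    also have "\<dots> = (\<Sum>l<n. \<Sum>a\<in>UNIV. \<Sum>j\<in>UNIV. \<Sum>a'\<in>UNIV. \<Sum>j'\<in>UNIV. f l a j a' j')"
      by (rule sum.cong[OF refl], rule sum.cong[OF refl], rule sum.swap)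
    also have "\<dots> = (\<Sum>l<n. sip (tv l) (\<gamma> *v tv l))"
      by (simp add: sip_def matrix_vector_mult_def sum_pair tv_def f_def sum_distrib_left sum_distrib_right mult_ac)
    finally have "sip v (Fmap \<gamma> Y *v v) = (\<Sum>l<n. sip (tv l) (\<gamma> *v tv l))" .
    then have "Re (sip v (Fmap \<gamma> Y *v v)) = (\<Sum>l<n. Re (sip (tv l) (\<gamma> *v tv l)))" by simp
    also have "\<dots> \<ge> 0" by (rule sum_nonneg) (rule psd_qf[OF assms(1)])
    finally show ?thesis .
  qed
  then show ?thesis using herm unfolding psd_def sip_def by simp
qed

lemma FG_pos:
  fixes \<gamma> :: "('k::finite \<times> 'm::finite) cmat"
  assumes "psd \<gamma>" shows "positive_map (FG \<gamma>)"
  unfolding positive_map_def FG_def comp_def using posF[OF assms] posG[OF assms] by blast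

lemma G_zero_of_FG:
  fixes \<gamma> :: "('k::finite \<times> 'm::finite) cmat"
  assumes H: "hermitian \<gamma>" and z: "FG \<gamma> X = 0"
  shows "Gmap \<gamma> X = 0"
proof -
  have "tinner (Gmap \<gamma> X) (Gmap \<gamma> X) = tinner (Fmap \<gamma> (Gmap \<gamma> X)) X"
    by (simp add: adjF[OF H])
  also have "\<dots> = 0" using z by (simp add: FG_def tinner_sum)
  finally show ?thesis by (rule tinner_self_zero)
qed

definition unitm :: "'n::finite \<Rightarrow> 'n \<Rightarrow> 'n cmat" where
  "unitm b a = (\<chi> i k. if i = b \<and> k = a then 1 else 0)"

lemma colcond:
  fixes \<gamma> :: "('k::finite \<times> 'm::finite) cmat" and P :: "'k cmat"
  assumes z: "\<forall>E. Gmap \<gamma> (P ** E) = 0"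
  shows "\<gamma> *v tens (P *v axis b 1) j = 0"
proof -
  have "(\<gamma> *v tens (P *v axis b 1) j) $ (a, j0) = Gmap \<gamma> (P ** unitm b a) $ j0 $ j" for a j0
  proof -
    have "\<And>c c'. \<gamma>$(c,j0)$(c',j) * (P ** unitm b a)$c'$c = (if c = a then \<gamma>$(a,j0)$(c',j) * P$c'$b else 0)"
    proof -
      fix c c'
      have "(P ** unitm b a)$c'$c = (if c = a then P$c'$b else 0)"
      proof -
        have "\<And>i. P$c'$i * (unitm b a)$i$c = (if i = b then (if c = a then P$c'$b else 0) else 0)"
          by (simp add: unitm_def)
        then show ?thesis by (simp add: matrix_matrix_mult_def)
      qed
      then show "\<gamma>$(c,j0)$(c',j) * (P ** unitm b a)$c'$c = (if c = a then \<gamma>$(a,j0)$(c',j) * P$c'$b else 0)"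
        by simp
    qed
    then have "\<And>c. (\<Sum>c'\<in>UNIV. \<gamma>$(c,j0)$(c',j) * (P ** unitm b a)$c'$c) =
        (if c = a then (\<Sum>c'\<in>UNIV. \<gamma>$(a,j0)$(c',j) * P$c'$b) else 0)"
      by (case_tac "c = a") simp_all
    then have "Gmap \<gamma> (P ** unitm b a) $ j0 $ j = (\<Sum>c'\<in>UNIV. \<gamma>$(a,j0)$(c',j) * P$c'$b)"
      by (simp add: Gmap_def)
    then show ?thesis by (simp add: mv_tens mv_axis)
  qed
  then show ?thesis using z by (simp add: vec_eq_iff)
qed

lemma kernel_transfer:
  fixes \<gamma> A :: "'n::finite cmat"
  assumes "hermitian \<gamma>" "hermitian A" "img \<gamma> = img A" "\<gamma> *v v = 0"
  shows "A *v v = 0"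
proof -
  have "A *v (A *v v) \<in> img \<gamma>" using assms(3) by (auto simp: img_def)
  then obtain p where p: "A *v (A *v v) = \<gamma> *v p" by (auto simp: img_def)
  have "sip (A *v v) (A *v v) = sip (A *v (A *v v)) v" by (simp add: sip_herm[OF assms(2)])
  also have "\<dots> = sip p (\<gamma> *v v)" by (simp add: p sip_herm[OF assms(1)])
  also have "\<dots> = 0" using assms(4) by simp
  finally show ?thesis by (rule sip_self_zero)
qed

lemma G_lmul_zero:
  fixes A :: "('k::finite \<times> 'm::finite) cmat" and P :: "'k cmat"
  assumes z: "\<forall>b j. A *v tens (P *v axis b 1) j = 0"
  shows "Gmap A (P ** E) = 0"
proof -
  have "Gmap A (P ** E) $ j0 $ j = 0" for j0 j
  proof -
    have "Gmap A (P ** E) $ j0 $ j = (\<Sum>c\<in>UNIV. \<Sum>c'\<in>UNIV. \<Sum>b\<in>UNIV. E$b$c * (A$(c,j0)$(c',j) * P$c'$b))"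
      by (simp add: Gmap_def matrix_matrix_mult_def sum_distrib_left mult_ac)
    also have "\<dots> = (\<Sum>c\<in>UNIV. \<Sum>b\<in>UNIV. \<Sum>c'\<in>UNIV. E$b$c * (A$(c,j0)$(c',j) * P$c'$b))"
      by (rule sum.cong[OF refl], rule sum.swap)
    also have "\<dots> = (\<Sum>c\<in>UNIV. \<Sum>b\<in>UNIV. E$b$c * (A *v tens (P *v axis b 1) j) $ (c,j0))"
      by (simp add: mv_tens mv_axis sum_distrib_left)
    also have "\<dots> = 0" using z by simp
    finally show ?thesis .
  qed
  then show ?thesis by (simp add: vec_eq_iff)
qed

lemma G_rmul_zero:
  fixes A :: "('k::finite \<times> 'm::finite) cmat" and P :: "'k cmat"
  assumes H: "hermitian A" and HP: "hermitian P" and z: "\<forall>b j. A *v tens (P *v axis b 1) j = 0"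
  shows "Gmap A (E ** P) = 0"
proof -
  have "Gmap A (E ** P) $ j0 $ j = 0" for j0 j
  proof -
    have "Gmap A (E ** P) $ j0 $ j = (\<Sum>c\<in>UNIV. \<Sum>c'\<in>UNIV. \<Sum>b\<in>UNIV. E$c'$b * (A$(c,j0)$(c',j) * P$b$c))"
      by (simp add: Gmap_def matrix_matrix_mult_def sum_distrib_left mult_ac)
    also have "\<dots> = (\<Sum>c'\<in>UNIV. \<Sum>c\<in>UNIV. \<Sum>b\<in>UNIV. E$c'$b * (A$(c,j0)$(c',j) * P$b$c))"
      by (rule sum.swap)
    also have "\<dots> = (\<Sum>c'\<in>UNIV. \<Sum>b\<in>UNIV. \<Sum>c\<in>UNIV. E$c'$b * (A$(c,j0)$(c',j) * P$b$c))"
      by (rule sum.cong[OF refl], rule sum.swap)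
    also have "\<dots> = (\<Sum>c'\<in>UNIV. \<Sum>b\<in>UNIV. E$c'$b * cnj ((A *v tens (P *v axis b 1) j0) $ (c',j)))"
      by (simp add: mv_tens mv_axis sum_distrib_left herm_entry[OF H] herm_entry[OF HP] mult_ac)
    also have "\<dots> = 0" using z by simp
    finally show ?thesis .
  qed
  then show ?thesis by (simp add: vec_eq_iff)
qed

lemma Gmap_add: "Gmap \<gamma> (X + Y) = Gmap \<gamma> X + Gmap \<gamma> Y"
  by (simp add: Gmap_def vec_eq_iff distrib_left sum.distrib)
lemma Fmap_zero: "Fmap \<gamma> 0 = 0"
  by (simp add: Fmap_def vec_eq_iff)

definition cond3 :: "('k::finite \<times> 'm::finite) cmat \<Rightarrow> 'k cmat \<Rightarrow> bool" where
  "cond3 \<gamma> V \<longleftrightarrow> (\<forall>X \<in> {Y + Z | Y Z. Y \<in> lmul_sp (perp V) \<and> Z \<in> rmul_sp (perp V)}. FG \<gamma> X = 0)"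

lemma cond3_transfer:
  fixes \<gamma> A :: "('k::finite \<times> 'm::finite) cmat"
  assumes "psd \<gamma>" "psd A" "img \<gamma> = img A" "orth_proj V" "cond3 \<gamma> V"
  shows "cond3 A V"
proof -
  have H: "hermitian \<gamma>" and HA: "hermitian A" using assms by (simp_all add: psd_herm)
  define P where "P = perp V"
  have HP: "hermitian P" unfolding P_def using assms(4) by (rule perp_herm)
  have "\<forall>E. Gmap \<gamma> (P ** E) = 0"
  proof
    fix E
    have "P ** E + 0 ** P \<in> {Y + Z | Y Z. Y \<in> lmul_sp (perp V) \<and> Z \<in> rmul_sp (perp V)}"
      unfolding lmul_sp_def rmul_sp_def P_def by blast
    then have "FG \<gamma> (P ** E + 0 ** P) = 0" using assms(5) by (simp add: cond3_def)
    then show "Gmap \<gamma> (P ** E) = 0" by (intro G_zero_of_FG[OF H]) simp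
  qed
  then have "\<forall>b j. \<gamma> *v tens (P *v axis b 1) j = 0" using colcond by blast
  then have zA: "\<forall>b j. A *v tens (P *v axis b 1) j = 0"
    using kernel_transfer[OF H HA assms(3)] by blast
  show ?thesis unfolding cond3_def
  proof
    fix X assume "X \<in> {Y + Z | Y Z. Y \<in> lmul_sp (perp V) \<and> Z \<in> rmul_sp (perp V)}"
    then obtain E1 E2 where X: "X = P ** E1 + E2 ** P"
      unfolding lmul_sp_def rmul_sp_def P_def by blast
    have "Gmap A X = 0"
      unfolding X Gmap_add G_lmul_zero[OF zA] G_rmul_zero[OF HA HP zA] by simp
    then show "FG A X = 0" by (simp add: FG_def Fmap_zero)
  qed
qed

lemma mm_nth: "(A ** B)$i$k = (\<Sum>n\<in>UNIV. A$i$n * B$n$k)"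
  by (simp add: matrix_matrix_mult_def)

lemma tinner_unit:
  fixes V X :: "'n::finite cmat"
  assumes HV: "hermitian V"
  shows "tinner X (V ** unitm a b ** V) = (V ** X ** V)$a$b"
proof -
  have e: "(V ** unitm a b ** V)$i$k = V$i$a * V$b$k" for i k
  proof -
    have "\<And>n. (V ** unitm a b)$i$n = (if n = b then V$i$a else 0)"
    proof -
      fix n
      have "\<And>m. V$i$m * unitm a b $ m $ n = (if m = a then (if n = b then V$i$a else 0) else 0)"
        by (simp add: unitm_def)
      then show "(V ** unitm a b)$i$n = (if n = b then V$i$a else 0)"
        by (simp add: matrix_matrix_mult_def)
    qed
    then have "\<And>n. (V ** unitm a b)$i$n * V$n$k = (if n = b then V$i$a * V$b$k else 0)" by simp
    then show ?thesis by (simp only: mm_nth[of "V ** unitm a b" V]) simp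
  qed
  have "tinner X (V ** unitm a b ** V) = (\<Sum>i\<in>UNIV. \<Sum>k\<in>UNIV. V$a$i * X$i$k * V$k$b)"
    by (simp add: tinner_sum e herm_entry[OF HV] mult_ac)
  also have "\<dots> = (\<Sum>k\<in>UNIV. \<Sum>i\<in>UNIV. V$a$i * X$i$k * V$k$b)" by (rule sum.swap)
  also have "\<dots> = (V ** X ** V)$a$b"
    by (simp add: matrix_matrix_mult_def sum_distrib_right)
  finally show ?thesis .
qed

lemma CR_intro:
  fixes \<gamma> :: "('k::finite \<times> 'm::finite) cmat"
  assumes "psd \<gamma>" "orth_proj V" "FG \<gamma> ` sandw V V \<subseteq> sandw V V"
    "irreducible_on (FG \<gamma>) V" "cond3 \<gamma> V"
  shows "\<gamma> \<in> CR"
proof -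
  have H: "hermitian \<gamma>" using assms(1) by (rule psd_herm)
  have HV: "hermitian V" using assms(2) by (rule op_herm)
  have last: "FG \<gamma> X = 0" if orth: "\<forall>Y\<in>sandw V V. tinner X Y = 0" for X
  proof -
    have "V ** unitm a b ** V \<in> sandw V V" for a b unfolding sandw_def by blast
    then have "(V ** X ** V)$a$b = 0" for a b using orth tinner_unit[OF HV, of X a b] by simp
    then have VXV: "V ** X ** V = 0" by (simp add: vec_eq_iff)
    have "perp V ** X + (V ** X) ** perp V = X - V ** X ** V"
      by (simp add: perp_def mm_diff_left mm_diff_right)
    then have "X = perp V ** X + (V ** X) ** perp V" using VXV by simp
    then have "X \<in> {Y + Z | Y Z. Y \<in> lmul_sp (perp V) \<and> Z \<in> rmul_sp (perp V)}"
      unfolding lmul_sp_def rmul_sp_def by blast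
    then show ?thesis using assms(5) by (simp add: cond3_def)
  qed
  have "completely_reducible (FG \<gamma>)"
    unfolding completely_reducible_def
  proof (intro conjI)
    show "self_adjoint_map (FG \<gamma>)" by (rule FG_selfadj[OF H])
    show "positive_map (FG \<gamma>)" by (rule FG_pos[OF assms(1)])
    show "\<exists>Ws. (\<forall>i<length Ws. orth_proj (Ws ! i)) \<and>
        (\<forall>i<length Ws. \<forall>j<length Ws. i \<noteq> j \<longrightarrow> Ws ! i ** Ws ! j = 0) \<and>
        (\<forall>i<length Ws. FG \<gamma> ` sandw (Ws ! i) (Ws ! i) \<subseteq> sandw (Ws ! i) (Ws ! i)
                        \<and> irreducible_on (FG \<gamma>) (Ws ! i)) \<and>
        (\<forall>X. (\<forall>i<length Ws. \<forall>Y\<in>sandw (Ws ! i) (Ws ! i). tinner X Y = 0) \<longrightarrow> FG \<gamma> X = 0)"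
      by (rule exI[of _ "[V]"]) (simp add: assms(2,3,4) last)
  qed
  then show ?thesis using assms(1) by (simp add: CR_def is_state_def)
qed

theorem mainTheorem9:
  fixes \<gamma> A :: "('k::finite \<times> 'm::finite) cmat" and V1 :: "'k cmat"
  assumes "is_state \<gamma>" and "is_state A" and "img \<gamma> = img A"
    and "orth_proj V1"
    and "FG \<gamma> ` sandw V1 V1 \<subseteq> sandw V1 V1"
    and "irreducible_on (FG \<gamma>) V1"
    and "\<forall>X \<in> {Y + Z | Y Z. Y \<in> lmul_sp (perp V1) \<and> Z \<in> rmul_sp (perp V1)}. FG \<gamma> X = 0"
  shows "FG A ` sandw V1 V1 \<subseteq> sandw V1 V1
    \<and> irreducible_on (FG A) V1
    \<and> (\<forall>X \<in> {Y + Z | Y Z. Y \<in> lmul_sp (perp V1) \<and> Z \<in> rmul_sp (perp V1)}. FG A X = 0)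
    \<and> \<gamma> \<in> CR \<and> A \<in> CR"
proof -
  have pg: "psd \<gamma>" and pA: "psd A" using assms(1,2) by (simp_all add: is_state_def)
  have c3: "cond3 \<gamma> V1" using assms(7) by (simp add: cond3_def)
  have i1: "FG A ` sandw V1 V1 \<subseteq> sandw V1 V1"
    by (rule Inv_transfer[OF pg pA assms(3) assms(4) assms(5)])
  have i2: "irreducible_on (FG A) V1"
    unfolding irreducible_on_def
  proof (intro allI impI)
    fix W assume W: "orth_proj W \<and> sandw W W \<subseteq> sandw V1 V1 \<and> FG A ` sandw W W \<subseteq> sandw W W"
    then have "FG \<gamma> ` sandw W W \<subseteq> sandw W W"
      using Inv_transfer[OF pA pg assms(3)[symmetric]] by blast
    then show "W = 0 \<or> W = V1" using assms(6) W unfolding irreducible_on_def by blast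
  qed
  have c3A: "cond3 A V1" by (rule cond3_transfer[OF pg pA assms(3) assms(4) c3])
  have "\<gamma> \<in> CR" by (rule CR_intro[OF pg assms(4) assms(5) assms(6) c3])
  moreover have "A \<in> CR" by (rule CR_intro[OF pA assms(4) i1 i2 c3A])
  ultimately show ?thesis using i1 i2 c3A by (simp add: cond3_def)
qed

end
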